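(* Let $n$ and $k$ be odd integers with $k\ge 3$ and $n>2k+1$. Then there is a homomorphism $\mathrm{Pet}(n,k)\to C_n^{\,k}$.
   Context: For integers $n,k$ with $2<2k\le n$, the generalized Petersen graph $\mathrm{Pet}(n,k)$ has vertex set $\{u_0,\dots,u_{n-1}\}\cup\{v_0,\dots,v_{n-1}\}$ and edge set $\{u_iu_{i+1}\}\cup\{u_iv_i\}\cup\{v_iv_{i+k}\}$, indices modulo $n$. $C_n$ is the cycle of length $n$. For a graph $G$ and positive integer $m$, the power graph $G^m$ has vertex set $V(G)$, two distinct vertices being adjacent iff there is a walk of length exactly $m$ between them in $G$. A homomorphism $G\to H$ is a map $V(G)\to V(H)$ sending edges to edges. *)

theory Defs
  imports Main
begin

type_synonym 'a graph = "'a set \<times> ('a \<Rightarrow> 'a \<Rightarrow> bool)"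

definition verts :: "'a graph \<Rightarrow> 'a set" where "verts G = fst G"
definition adj :: "'a graph \<Rightarrow> 'a \<Rightarrow> 'a \<Rightarrow> bool" where "adj G = snd G"

text \<open>Generalized Petersen graph Pet(n,k): vertex (False,i) is u_i, (True,i) is v_i.\<close>

definition pet_edge :: "nat \<Rightarrow> nat \<Rightarrow> bool \<times> nat \<Rightarrow> bool \<times> nat \<Rightarrow> bool" where
  "pet_edge n k x y \<longleftrightarrow>
     (\<exists>i<n. (x = (False, i) \<and> y = (False, (i + 1) mod n))
          \<or> (x = (False, i) \<and> y = (True, i))
          \<or> (x = (True, i) \<and> y = (True, (i + k) mod n)))"

definition Pet :: "nat \<Rightarrow> nat \<Rightarrow> (bool \<times> nat) graph" where
  "Pet n k = ({p. snd p < n}, (\<lambda>x y. pet_edge n k x y \<or> pet_edge n k y x))"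

definition cycle_graph :: "nat \<Rightarrow> nat graph" where
  "cycle_graph n = ({..<n}, (\<lambda>i j. i < n \<and> j < n \<and> (j = (i + 1) mod n \<or> i = (j + 1) mod n)))"

definition is_walk :: "'a graph \<Rightarrow> 'a list \<Rightarrow> bool" where
  "is_walk G xs \<longleftrightarrow> xs \<noteq> [] \<and> set xs \<subseteq> verts G \<and>
     (\<forall>i. Suc i < length xs \<longrightarrow> adj G (xs ! i) (xs ! Suc i))"

definition walk_of_length :: "'a graph \<Rightarrow> nat \<Rightarrow> 'a \<Rightarrow> 'a \<Rightarrow> bool" where
  "walk_of_length G m x y \<longleftrightarrow>
     (\<exists>xs. is_walk G xs \<and> length xs = m + 1 \<and> hd xs = x \<and> last xs = y)"

definition power_graph :: "'a graph \<Rightarrow> nat \<Rightarrow> 'a graph" where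
  "power_graph G m = (verts G, (\<lambda>x y. x \<noteq> y \<and> walk_of_length G m x y))"

definition graph_hom :: "'a graph \<Rightarrow> 'b graph \<Rightarrow> ('a \<Rightarrow> 'b) \<Rightarrow> bool" where
  "graph_hom G H f \<longleftrightarrow>
     (\<forall>x\<in>verts G. f x \<in> verts H) \<and>
     (\<forall>x\<in>verts G. \<forall>y\<in>verts G. adj G x y \<longrightarrow> adj H (f x) (f y))"

end

theory Submission
  imports Defs
begin

lemma walk_from_fun:
  assumes n: "n > 0"
    and step: "\<And>s. s < m \<Longrightarrow> p (Suc s) = Suc (p s) \<or> p s = Suc (p (Suc s))"
  shows "walk_of_length (cycle_graph n) m (p 0 mod n) (p m mod n)"
proof -
  define xs where "xs = map (\<lambda>s. p s mod n) [0..<m+1]"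
  have len: "length xs = m + 1" by (simp add: xs_def)
  have nth: "\<And>s. s < m + 1 \<Longrightarrow> xs ! s = p s mod n"
    by (simp add: xs_def nth_append del: upt_Suc)
  have "is_walk (cycle_graph n) xs"
    unfolding is_walk_def
  proof (intro conjI allI impI)
    show "xs \<noteq> []" using len by auto
    show "set xs \<subseteq> verts (cycle_graph n)"
      using n by (auto simp: xs_def verts_def cycle_graph_def)
  next
    fix s assume s: "Suc s < length xs"
    hence sm: "s < m" using len by simp
    have a: "xs ! s = p s mod n" "xs ! Suc s = p (Suc s) mod n"
      using nth sm by auto
    from step[OF sm] show "adj (cycle_graph n) (xs ! s) (xs ! Suc s)"
      unfolding a adj_def cycle_graph_def using n
      by (auto simp: mod_Suc_eq)
  qed
  moreover have "hd xs = p 0 mod n" proof -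
    have "xs \<noteq> []" using len by auto
    hence "hd xs = xs ! 0" by (simp add: hd_conv_nth)
    thus ?thesis using nth[of 0] by simp
  qed
  moreover have "last xs = p m mod n" proof -
    have "xs \<noteq> []" using len by auto
    hence "last xs = xs ! m" using len by (simp add: last_conv_nth)
    thus ?thesis using nth[of m] by simp
  qed
  ultimately show ?thesis unfolding walk_of_length_def using len by blast
qed

lemma pow_adj:
  assumes "n > k" "0 < t" "t \<le> k" "odd t" "odd k"
  shows "adj (power_graph (cycle_graph n) k) (a mod n) ((a + t) mod n)
       \<and> adj (power_graph (cycle_graph n) k) ((a + t) mod n) (a mod n)"
proof -
  have n: "n > 0" using assms by simp
  have ev: "even (k - t)" using assms by simp
  have ne: "a mod n \<noteq> (a + t) mod n"
  proof
    assume "a mod n = (a + t) mod n"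
    hence "n dvd (a + t) - a" using mod_eq_dvd_iff_nat[of a "a+t" n] by simp
    hence "n dvd t" by simp
    thus False using assms by (auto dest: dvd_imp_le)
  qed
  define p where "p s = a + min s t + (s - t) mod 2" for s
  have w1: "walk_of_length (cycle_graph n) k (p 0 mod n) (p k mod n)"
  proof (rule walk_from_fun[OF n])
    fix s show "p (Suc s) = Suc (p s) \<or> p s = Suc (p (Suc s))"
    proof (cases "s < t")
      case True thus ?thesis by (simp add: p_def)
    next
      case False
      hence "Suc s - t = Suc (s - t)" by simp
      thus ?thesis using False by (simp add: p_def mod_Suc)
    qed
  qed
  have "p 0 = a" "p k = a + t" using ev assms by (auto simp: p_def)
  with w1 have W1: "walk_of_length (cycle_graph n) k (a mod n) ((a + t) mod n)" by simp
  define q where "q s = a + t - min s t + (s - t) mod 2" for s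
  have w2: "walk_of_length (cycle_graph n) k (q 0 mod n) (q k mod n)"
  proof (rule walk_from_fun[OF n])
    fix s show "q (Suc s) = Suc (q s) \<or> q s = Suc (q (Suc s))"
    proof (cases "s < t")
      case True thus ?thesis by (simp add: q_def, arith)
    next
      case False
      hence "Suc s - t = Suc (s - t)" by simp
      thus ?thesis using False by (simp add: q_def mod_Suc)
    qed
  qed
  have "q 0 = a + t" "q k = a" using ev assms by (auto simp: q_def)
  with w2 have W2: "walk_of_length (cycle_graph n) k ((a + t) mod n) (a mod n)" by simp
  show ?thesis using W1 W2 ne by (simp add: adj_def power_graph_def)
qed

theorem theorem5:
  fixes n k :: nat
  assumes "odd n" and "odd k" and "k \<ge> 3" and "n > 2 * k + 1"
  shows "\<exists>f. graph_hom (Pet n k) (power_graph (cycle_graph n) k) f"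
proof -
  define f where "f x = (if fst x then (snd x + 1) mod n else snd x)" for x :: "bool \<times> nat"
  have nk: "n > k" using assms by simp
  have n: "n > 0" using assms by simp
  have P1: "adj (power_graph (cycle_graph n) k) (a mod n) ((a + 1) mod n)
       \<and> adj (power_graph (cycle_graph n) k) ((a + 1) mod n) (a mod n)" for a
    using pow_adj[OF nk, of 1] assms by simp
  have Pk: "adj (power_graph (cycle_graph n) k) (a mod n) ((a + k) mod n)
       \<and> adj (power_graph (cycle_graph n) k) ((a + k) mod n) (a mod n)" for a
    using pow_adj[OF nk, of k] assms by simp
  have E: "adj (power_graph (cycle_graph n) k) (f x) (f y)"
    if "pet_edge n k x y \<or> pet_edge n k y x" for x y
  proof -
    have H: "adj (power_graph (cycle_graph n) k) (f x) (f y)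
           \<and> adj (power_graph (cycle_graph n) k) (f y) (f x)" if e: "pet_edge n k x y" for x y
    proof -
      from e obtain i where i: "i < n" and
        c: "(x = (False, i) \<and> y = (False, (i + 1) mod n))
          \<or> (x = (False, i) \<and> y = (True, i))
          \<or> (x = (True, i) \<and> y = (True, (i + k) mod n))"
        unfolding pet_edge_def by blast
      have im: "i mod n = i" using i by simp
      from c show ?thesis
      proof (elim disjE conjE)
        assume "x = (False, i)" "y = (False, (i + 1) mod n)"
        thus ?thesis using P1[of i] im by (simp add: f_def)
      next
        assume "x = (False, i)" "y = (True, i)"
        thus ?thesis using P1[of i] im by (simp add: f_def)
      next
        assume "x = (True, i)" "y = (True, (i + k) mod n)"
        moreover have "((i + k) mod n + 1) mod n = (i + 1 + k) mod n"
          by (metis Suc_eq_plus1 add_Suc mod_Suc_eq)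
        ultimately show ?thesis using Pk[of "i+1"] by (simp add: f_def)
      qed
    qed
    from that show ?thesis using H by blast
  qed
  have "graph_hom (Pet n k) (power_graph (cycle_graph n) k) f"
    unfolding graph_hom_def
  proof (intro conjI ballI impI)
    fix x assume "x \<in> verts (Pet n k)"
    thus "f x \<in> verts (power_graph (cycle_graph n) k)"
      using n by (auto simp: f_def verts_def Pet_def power_graph_def cycle_graph_def)
  next
    fix x y assume "x \<in> verts (Pet n k)" "y \<in> verts (Pet n k)" "adj (Pet n k) x y"
    moreover have "adj (Pet n k) x y = (pet_edge n k x y \<or> pet_edge n k y x)"
      by (simp add: adj_def Pet_def)
    ultimately show "adj (power_graph (cycle_graph n) k) (f x) (f y)"
      using E by blast
  qed
  thus ?thesis by blast
qed

end
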